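(* Let $n$ be an odd integer. If the cycle $C_n$ admits an optimal extended irregular dominating set, then the cycle $C_{2n}$ also admits an optimal extended irregular dominating set.
   Context: $C_m$ is the cycle on $m$ vertices. In a finite simple graph $\Gamma=(V,E)$ with distance $d$, a vertex $v$ carrying a non-negative integer label $\ell$ dominates (covers) exactly the vertices $u$ with $d(u,v)=\ell$; a vertex labeled $0$ dominates only itself. For $k\ge0$, a $k$-extended irregular dominating set is a set $S\subseteq V$ of $k$ vertices with a labeling $\lambda:S\to\mathbb{Z}_{\ge0}$ with distinct labels, such that every vertex of $V$ is dominated by some vertex of $S$; it is assumed that some vertex of $S$ has label $0$. $\gamma_e(\Gamma)$ is the minimum cardinality of such a set; a $k$-extended irregular dominating set is optimal if $k=\gamma_e(\Gamma)$. *)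

theory Defs
  imports Main
begin

definition cycle_verts :: "nat \<Rightarrow> nat set" where
  "cycle_verts m = {..<m}"

definition cycle_adj :: "nat \<Rightarrow> nat \<Rightarrow> nat \<Rightarrow> bool" where
  "cycle_adj m u v \<longleftrightarrow> u < m \<and> v < m \<and> u \<noteq> v \<and> (v = (u + 1) mod m \<or> u = (v + 1) mod m)"

definition gdist :: "('a \<Rightarrow> 'a \<Rightarrow> bool) \<Rightarrow> 'a \<Rightarrow> 'a \<Rightarrow> nat" where
  "gdist E u v = (LEAST k. (E ^^ k) u v)"

definition ext_irr_dom_set ::
  "'a set \<Rightarrow> ('a \<Rightarrow> 'a \<Rightarrow> bool) \<Rightarrow> 'a set \<Rightarrow> ('a \<Rightarrow> nat) \<Rightarrow> bool" where
  "ext_irr_dom_set V E S lab \<longleftrightarrow>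
     S \<subseteq> V \<and> inj_on lab S \<and> (\<exists>s\<in>S. lab s = 0) \<and>
     (\<forall>u\<in>V. \<exists>v\<in>S. gdist E u v = lab v)"

definition gamma_e :: "'a set \<Rightarrow> ('a \<Rightarrow> 'a \<Rightarrow> bool) \<Rightarrow> nat" where
  "gamma_e V E = (LEAST k. \<exists>S lab. ext_irr_dom_set V E S lab \<and> card S = k)"

definition optimal_ext_irr_dom_set ::
  "'a set \<Rightarrow> ('a \<Rightarrow> 'a \<Rightarrow> bool) \<Rightarrow> 'a set \<Rightarrow> ('a \<Rightarrow> nat) \<Rightarrow> bool" where
  "optimal_ext_irr_dom_set V E S lab \<longleftrightarrow>
     ext_irr_dom_set V E S lab \<and> card S = gamma_e V E"

definition admits_optimal_eids :: "nat \<Rightarrow> bool" where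
  "admits_optimal_eids m \<longleftrightarrow>
     (\<exists>S lab. optimal_ext_irr_dom_set (cycle_verts m) (cycle_adj m) S lab)"

end

theory Submission imports Defs begin

definition D :: "int \<Rightarrow> int \<Rightarrow> int" where
  "D m x = min (x mod m) ((- x) mod m)"

lemma D_mod: "D m (x mod m) = D m x"
  unfolding D_def by (metis mod_minus_eq mod_mod_trivial)

lemma D_neg: "D m (- x) = D m x"
  unfolding D_def by (simp add: min.commute)

lemma modsuc: assumes "(m::int) > 0" shows "(x + 1) mod m = (if x mod m = m - 1 then 0 else x mod m + 1)"
  by (smt (verit, ccfv_SIG) assms mod_diff_eq mod_pos_pos_trivial pos_mod_bound pos_mod_sign)

lemma D_suc: assumes "m > 0" shows "D m (x + 1) \<le> D m x + 1"
proof -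
  have a: "(x + 1) mod m = (if x mod m = m - 1 then 0 else x mod m + 1)"
    using modsuc assms by blast
  have b: "(-x) mod m = (if (-x-1) mod m = m - 1 then 0 else (-x-1) mod m + 1)"
    using modsuc[OF assms, of "-x-1"] by simp
  have c: "(-(x+1)) mod m = (-x-1) mod m" by simp
  have "0 \<le> (-x-1) mod m" "(-x-1) mod m < m" "0 \<le> x mod m" "x mod m < m" using assms by auto
  then show ?thesis unfolding D_def c using a b by (auto simp: min_def split: if_splits)
qed

lemma D_pred: assumes "m > 0" shows "D m (x - 1) \<le> D m x + 1"
  using D_suc[OF assms, of "-x"] D_neg[of m x] D_neg[of m "x - 1"] by simp

lemma D_bound: assumes "m > 0" shows "0 \<le> D m x" "2 * D m x \<le> m"
proof -
  have "(-x) mod m = (if x mod m = 0 then 0 else m - x mod m)"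
    using assms by (metis add.inverse_inverse mod_minus_eq zmod_zminus1_eq_if)
  moreover have "0 \<le> x mod m" "x mod m < m" using assms by auto
  ultimately show "0 \<le> D m x" "2 * D m x \<le> m" unfolding D_def using assms
    by (smt (verit))+
qed

lemma D_cong: "a mod m = b mod m \<Longrightarrow> D m a = D m b"
  by (metis D_mod)

lemma cyc_sym: "cycle_adj m a b \<Longrightarrow> cycle_adj m b a"
  unfolding cycle_adj_def by auto

lemma pow_sym: "(cycle_adj m ^^ k) u v \<Longrightarrow> (cycle_adj m ^^ k) v u"
proof (induction k arbitrary: u v)
  case 0 then show ?case by simp
next
  case (Suc k)
  from Suc.prems obtain y where "(cycle_adj m ^^ k) u y" "cycle_adj m y v" by (rule relpowp_Suc_E)
  then show ?case using Suc.IH cyc_sym relpowp_Suc_I2 by metis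
qed

lemma adj_succ: assumes "2 \<le> m" "a < m" shows "cycle_adj m a (Suc a mod m)"
proof (cases "Suc a < m")
  case True then show ?thesis unfolding cycle_adj_def using assms by simp
next
  case False
  then have "Suc a = m" using assms by simp
  then show ?thesis unfolding cycle_adj_def using assms by auto
qed

lemma walk: assumes "2 \<le> m" "u < m" shows "(cycle_adj m ^^ k) u ((u + k) mod m)"
proof (induction k)
  case 0 then show ?case using assms by simp
next
  case (Suc k)
  have "cycle_adj m ((u + k) mod m) (Suc ((u + k) mod m) mod m)"
    using adj_succ assms by simp
  then have "cycle_adj m ((u + k) mod m) ((u + Suc k) mod m)"
    by (simp add: mod_Suc_eq)
  then show ?case using Suc relpowp_Suc_I by metis
qed

lemma adj_mod: "cycle_adj m a b \<Longrightarrow> int b mod int m = (int a + 1) mod int m \<or> int b mod int m = (int a - 1) mod int m"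
proof -
  assume h: "cycle_adj m a b"
  then have "b = (a + 1) mod m \<or> a = (b + 1) mod m" unfolding cycle_adj_def by auto
  then show ?thesis
  proof
    assume "b = (a + 1) mod m"
    then have "int b = (int a + 1) mod int m" by (simp add: zmod_int add.commute)
    then show ?thesis by simp
  next
    assume "a = (b + 1) mod m"
    then have "int a = (int b + 1) mod int m" by (simp add: zmod_int add.commute)
    then have "(int a - 1) mod int m = ((int b + 1) - 1) mod int m" by (metis mod_diff_left_eq)
    then show ?thesis by simp
  qed
qed

lemma lower: assumes "m > 0" shows "(cycle_adj m ^^ k) u v \<Longrightarrow> D (int m) (int v - int u) \<le> int k"
proof (induction k arbitrary: v)
  case 0 then show ?case by (simp add: D_def)
next
  case (Suc k)
  from Suc.prems obtain y where y: "(cycle_adj m ^^ k) u y" "cycle_adj m y v" by (rule relpowp_Suc_E)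
  have ih: "D (int m) (int y - int u) \<le> int k" using Suc.IH y(1) .
  from adj_mod[OF y(2)] show ?case
  proof
    assume h: "int v mod int m = (int y + 1) mod int m"
    have "(int v - int u) mod int m = ((int y - int u) + 1) mod int m"
      by (metis h diff_add_eq mod_diff_left_eq)
    then have "D (int m) (int v - int u) = D (int m) ((int y - int u) + 1)" by (rule D_cong)
    then show ?thesis using D_suc[of "int m" "int y - int u"] ih assms by simp
  next
    assume h: "int v mod int m = (int y - 1) mod int m"
    have "(int v - int u) mod int m = ((int y - int u) - 1) mod int m"
      by (metis h diff_right_commute mod_diff_left_eq)
    then have "D (int m) (int v - int u) = D (int m) ((int y - int u) - 1)" by (rule D_cong)
    then show ?thesis using D_pred[of "int m" "int y - int u"] ih assms by simp
  qed
qed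

lemma gdist_cyc: assumes "2 \<le> m" "u < m" "v < m"
  shows "gdist (cycle_adj m) u v = nat (D (int m) (int v - int u))"
proof -
  let ?d = "nat (D (int m) (int v - int u))"
  have m0: "int m > 0" using assms by simp
  have "(cycle_adj m ^^ ?d) u v"
  proof (cases "(int v - int u) mod int m \<le> (int u - int v) mod int m")
    case True
    then have d: "?d = nat ((int v - int u) mod int m)" unfolding D_def by simp
    have i1: "int ?d = (int v - int u) mod int m" using d m0 by simp
    have "int ((u + ?d) mod m) = (int u + int ?d) mod int m" by (simp add: zmod_int)
    also have "\<dots> = (int u + (int v - int u) mod int m) mod int m" using i1 by simp
    also have "\<dots> = int v" using assms by (simp add: mod_add_right_eq)
    finally have "(u + ?d) mod m = v" by simp
    then show ?thesis using walk[OF assms(1,2), of ?d] by simp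
  next
    case False
    then have d: "?d = nat ((int u - int v) mod int m)" unfolding D_def by simp
    have i1: "int ?d = (int u - int v) mod int m" using d m0 by simp
    have "int ((v + ?d) mod m) = (int v + int ?d) mod int m" by (simp add: zmod_int)
    also have "\<dots> = (int v + (int u - int v) mod int m) mod int m" using i1 by simp
    also have "\<dots> = int u" using assms by (simp add: mod_add_right_eq)
    finally have "(v + ?d) mod m = u" by simp
    then have "(cycle_adj m ^^ ?d) v u" using walk[OF assms(1,3), of ?d] by simp
    then show ?thesis by (rule pow_sym)
  qed
  moreover have "\<And>k. (cycle_adj m ^^ k) u v \<Longrightarrow> ?d \<le> k"
    using lower[of m] m0 by (simp add: nat_le_iff)
  ultimately show ?thesis unfolding gdist_def by (rule Least_equality)
qed

lemma pure: fixes n r1 r2 nz1 nz2 :: int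
  assumes "0 \<le> r2" "r2 < 2*n" "r1 = (if r2 < n then r2 else r2 - n)"
   "nz2 = (if r2 = 0 then 0 else 2*n - r2)" "nz1 = (if r1 = 0 then 0 else n - r1)" "odd n"
  shows "min r2 nz2 = (if even r2 = even (min r1 nz1) then min r1 nz1 else n - min r1 nz1)"
proof -
  consider "r2 = 0" | "0 < r2" "r2 < n" | "r2 = n" | "n < r2" using assms(1) by linarith
  then show ?thesis
  proof cases
    case 1 then show ?thesis using assms by simp
  next
    case 2 then show ?thesis using assms unfolding min_def by simp
  next
    case 3 then show ?thesis using assms unfolding min_def by simp
  next
    case 4 then show ?thesis using assms unfolding min_def by simp
  qed
qed

lemma negmod: fixes m z :: int assumes "m > 0" shows "(-z) mod m = (if z mod m = 0 then 0 else m - z mod m)"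
  using assms by (metis zmod_zminus1_eq_if)

lemma modmod2: fixes n z :: int assumes "n > 0" shows "z mod n = (if z mod (2*n) < n then z mod (2*n) else z mod (2*n) - n)"
proof -
  have a: "z mod n = (z mod (2*n)) mod n" by (simp add: mod_mod_cancel)
  have b: "0 \<le> z mod (2*n)" "z mod (2*n) < 2*n" using assms by auto
  show ?thesis
  proof (cases "z mod (2*n) < n")
    case True then show ?thesis using a b by simp
  next
    case False
    then have "(z mod (2*n)) mod n = (z mod (2*n) - n) mod n" by (simp add: mod_diff_right_eq[symmetric])
    also have "\<dots> = z mod (2*n) - n" using False b by (intro mod_pos_pos_trivial) auto
    finally show ?thesis using a False by simp
  qed
qed

lemma evmod: fixes n z :: int shows "even (z mod (2*n)) = even z"
proof -
  define r where "r = z mod (2*n)"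
  have "z = (z div (2*n)) * (2*n) + r" unfolding r_def by (rule div_mult_mod_eq[symmetric])
  then have "z = 2 * ((z div (2*n)) * n) + r" by (simp add: algebra_simps)
  then obtain k where "z = 2*k + r" by blast
  then have "even z = even (2*k + r)" by simp
  then have "even r = even z" by simp
  then show ?thesis unfolding r_def .
qed

lemma D_double: fixes n z :: int assumes "n > 0" "odd n"
  shows "D (2*n) z = (if even z = even (D n z) then D n z else n - D n z)"
proof -
  have n2: "2*n > 0" using assms by simp
  have "min (z mod (2*n)) ((-z) mod (2*n)) = (if even (z mod (2*n)) = even (min (z mod n) ((-z) mod n))
     then min (z mod n) ((-z) mod n) else n - min (z mod n) ((-z) mod n))"
    by (rule pure[OF _ _ modmod2[OF assms(1)] negmod[OF n2] negmod[OF assms(1)] assms(2)])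
      (use n2 in auto)
  then show ?thesis unfolding D_def evmod .
qed


lemma D_le: assumes "(m::int) > 0" shows "D m x \<le> m div 2"
  using D_bound[OF assms, of x] by linarith

lemma main_construction:
  fixes n :: nat
  assumes odd: "odd n" and n3: "3 \<le> n"
    and ext: "ext_irr_dom_set (cycle_verts n) (cycle_adj n) S lab"
  shows "\<exists>S' lab'. ext_irr_dom_set (cycle_verts (2*n)) (cycle_adj (2*n)) S' lab'"
proof -
  define h where "h = n div 2"
  have nh: "n = 2*h + 1" using odd unfolding h_def by presburger
  have n0: "int n > 0" using n3 by simp
  have SV: "S \<subseteq> {..<n}" and inj: "inj_on lab S" and z0: "\<exists>s\<in>S. lab s = 0"
    and cov: "\<forall>u<n. \<exists>v\<in>S. gdist (cycle_adj n) u v = lab v"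
    using ext unfolding ext_irr_dom_set_def cycle_verts_def by auto
  define S0 where "S0 = {v\<in>S. lab v \<le> h}"
  have S0V: "S0 \<subseteq> {..<n}" using SV unfolding S0_def by auto
  have inj0: "inj_on lab S0" using inj unfolding S0_def by (rule inj_on_subset) auto
  have cov0: "\<exists>v\<in>S0. nat (D (int n) (int v - int u)) = lab v" if "u < n" for u
  proof -
    obtain v where v: "v \<in> S" "gdist (cycle_adj n) u v = lab v" using cov \<open>u < n\<close> by blast
    have "v < n" using v SV by auto
    then have e: "nat (D (int n) (int v - int u)) = lab v" using gdist_cyc[of n u v] v n3 \<open>u < n\<close> by simp
    have "D (int n) (int v - int u) \<le> int n div 2" using D_le[OF n0] .
    then have "lab v \<le> h" using e unfolding h_def by (simp add: zdiv_int)
    then show ?thesis using v e unfolding S0_def by auto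
  qed
  have fin0: "finite S0" using S0V finite_subset by blast
  have "card S0 \<le> card {..h}"
    using card_inj_on_le[OF inj0 _ finite_atMost] unfolding S0_def by auto
  then have "card S0 < card {..<n}" using nh n3 by simp
  have "\<not> {..<n} \<subseteq> S0"
  proof
    assume "{..<n} \<subseteq> S0"
    then have "card {..<n} \<le> card S0" using fin0 by (rule card_mono[rotated])
    then show False using \<open>card S0 < card {..<n}\<close> by simp
  qed
  then obtain c where c: "c < n" "c \<notin> S0" by auto
  define \<sigma> where "\<sigma> v = nat ((2 * int c - int v) mod int n)" for v
  have \<sigma>_int: "int (\<sigma> v) = (2 * int c - int v) mod int n" for v
    unfolding \<sigma>_def using n0 by simp
  have \<sigma>_lt: "\<sigma> v < n" for v
    using \<sigma>_int[of v] n0 by (metis of_nat_less_iff pos_mod_bound)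
  have \<sigma>\<sigma>: "\<sigma> (\<sigma> v) = v" if "v < n" for v
  proof -
    have "int (\<sigma> (\<sigma> v)) = (2 * int c - (2 * int c - int v) mod int n) mod int n"
      using \<sigma>_int by simp
    also have "\<dots> = (2 * int c - (2 * int c - int v)) mod int n" by (simp add: mod_diff_right_eq)
    also have "\<dots> = int v" using that by simp
    finally show ?thesis by simp
  qed
  have \<sigma>_iso: "D (int n) (int (\<sigma> v) - int y) = D (int n) (int v - int (\<sigma> y))" for v y
  proof -
    have "(int (\<sigma> v) - int y) mod int n = (2 * int c - int v - int y) mod int n"
      unfolding \<sigma>_int by (simp add: mod_diff_left_eq)
    moreover have "(int v - int (\<sigma> y)) mod int n = (- (2 * int c - int v - int y)) mod int n"
      unfolding \<sigma>_int by (metis minus_diff_eq mod_diff_right_eq diff_diff_eq2 add.commute diff_diff_eq)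
    ultimately show ?thesis using D_cong D_neg by metis
  qed
  define p where "p v = ((int v - int c) mod int n \<le> int h)" for v
  have p\<sigma>: "p (\<sigma> v) \<noteq> p v" if "v < n" "v \<noteq> c" for v
  proof -
    have a: "(int (\<sigma> v) - int c) mod int n = (int c - int v) mod int n"
      unfolding \<sigma>_int by (simp add: mod_diff_left_eq)
    have r0: "(int v - int c) mod int n \<noteq> 0"
    proof
      assume "(int v - int c) mod int n = 0"
      then have "int n dvd int v - int c" by (simp add: dvd_eq_mod_eq_0)
      then have "int v mod int n = int c mod int n" by (simp add: mod_eq_dvd_iff)
      then show False using that c by simp
    qed
    have "(int c - int v) mod int n = int n - (int v - int c) mod int n"
      using negmod[OF n0, of "int v - int c"] r0 by simp
    moreover have "0 \<le> (int v - int c) mod int n" "(int v - int c) mod int n < int n" using n0 by auto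
    ultimately show ?thesis unfolding p_def a using nh by auto
  qed
  define lift where "lift x b = (if odd x = b then x else x + n)" for x b
  have lift_lt: "x < n \<Longrightarrow> lift x b < 2*n" for x b unfolding lift_def by auto
  have lift_mod: "x < n \<Longrightarrow> lift x b mod n = x" for x b unfolding lift_def by auto
  have lift_odd: "odd (lift x b) = b" for x b unfolding lift_def using odd by auto
  define f where "f z = (if snd z then lift (fst z) (p (fst z)) else lift (\<sigma> (fst z)) (p (fst z)))" for z
  define g where "g z = (if snd z then (if odd (lab (fst z)) = p (fst z) then lab (fst z) else n - lab (fst z))
     else (if odd (lab (fst z)) = p (fst z) then n - lab (fst z) else lab (fst z)))" for z
  define I where "I = S0 \<times> (UNIV :: bool set)"
  have injf: "inj_on f I"
  proof (rule inj_onI)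
    fix z z' assume z: "z \<in> I" "z' \<in> I" "f z = f z'"
    obtain v b where zz: "z = (v, b)" by fastforce
    obtain v' b' where zz': "z' = (v', b')" by fastforce
    have v: "v \<in> S0" "v' \<in> S0" using z zz zz' unfolding I_def by auto
    then have vn: "v < n" "v' < n" "v \<noteq> c" "v' \<noteq> c" using S0V c by auto
    show "z = z'"
    proof (cases b; cases b')
      assume "b" "b'"
      then have "lift v (p v) = lift v' (p v')" using z(3) zz zz' unfolding f_def by simp
      then have "v = v'" using lift_mod vn by metis
      then show ?thesis using zz zz' \<open>b\<close> \<open>b'\<close> by simp
    next
      assume "\<not> b" "\<not> b'"
      then have "lift (\<sigma> v) (p v) = lift (\<sigma> v') (p v')" using z(3) zz zz' unfolding f_def by simp
      then have "\<sigma> v = \<sigma> v'" using lift_mod \<sigma>_lt by metis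
      then have "v = v'" using \<sigma>\<sigma> vn by metis
      then show ?thesis using zz zz' \<open>\<not>b\<close> \<open>\<not>b'\<close> by simp
    next
      assume "b" "\<not> b'"
      then have e: "lift v (p v) = lift (\<sigma> v') (p v')" using z(3) zz zz' unfolding f_def by simp
      then have "v = \<sigma> v'" using lift_mod vn \<sigma>_lt by metis
      moreover have "p v = p v'" using e lift_odd by metis
      ultimately show ?thesis using p\<sigma>[of v'] vn by simp
    next
      assume "\<not> b" "b'"
      then have e: "lift (\<sigma> v) (p v) = lift v' (p v')" using z(3) zz zz' unfolding f_def by simp
      then have "v' = \<sigma> v" using lift_mod vn \<sigma>_lt by metis
      moreover have "p v = p v'" using e lift_odd by metis
      ultimately show ?thesis using p\<sigma>[of v] vn by simp
    qed
  qed
  have labh: "lab v \<le> h" if "v \<in> S0" for v using that unfolding S0_def by auto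
  have injg: "inj_on g I"
  proof (rule inj_onI)
    fix z z' assume z: "z \<in> I" "z' \<in> I" "g z = g z'"
    obtain v b where zz: "z = (v, b)" by fastforce
    obtain v' b' where zz': "z' = (v', b')" by fastforce
    have v: "v \<in> S0" "v' \<in> S0" using z zz zz' unfolding I_def by auto
    have l: "lab v \<le> h" "lab v' \<le> h" using labh v by auto
    have ge: "g (v, b) = g (v', b')" using z zz zz' by simp
    have g1: "g (u, d) = lab u \<or> g (u, d) = n - lab u" for u d unfolding g_def by auto
    have "lab v = lab v'" using g1[of v b] g1[of v' b'] ge l nh by linarith
    then have vv: "v = v'" using inj0 v by (auto dest: inj_onD)
    have "g (v, True) \<noteq> g (v, False)" unfolding g_def using l nh by auto
    then have "b = b'" using ge vv by (cases b; cases b') auto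
    then show "z = z'" using vv zz zz' by simp
  qed
  define S' where "S' = f ` I"
  define lab' where "lab' = g \<circ> the_inv_into I f"
  have lab'f: "lab' (f z) = g z" if "z \<in> I" for z
    unfolding lab'_def using the_inv_into_f_f[OF injf that] by simp
  have "ext_irr_dom_set (cycle_verts (2*n)) (cycle_adj (2*n)) S' lab'"
    unfolding ext_irr_dom_set_def
  proof (intro conjI)
    show "S' \<subseteq> cycle_verts (2*n)"
      unfolding S'_def cycle_verts_def f_def I_def using S0V \<sigma>_lt lift_lt by auto
    show "inj_on lab' S'"
    proof (rule inj_onI)
      fix x y assume "x \<in> S'" "y \<in> S'" "lab' x = lab' y"
      then obtain z z' where "z \<in> I" "z' \<in> I" "x = f z" "y = f z'" "g z = g z'"
        unfolding S'_def using lab'f by auto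
      then show "x = y" using injg by (auto dest: inj_onD)
    qed
    show "\<exists>s\<in>S'. lab' s = 0"
    proof -
      obtain v where v: "v \<in> S" "lab v = 0" using z0 by blast
      then have v0: "v \<in> S0" unfolding S0_def by simp
      have "g (v, True) = 0 \<or> g (v, False) = 0" unfolding g_def using v by simp
      then show ?thesis using v0 lab'f unfolding S'_def I_def by force
    qed
    show "\<forall>u\<in>cycle_verts (2 * n). \<exists>v\<in>S'. gdist (cycle_adj (2 * n)) u v = lab' v"
    proof
      fix x assume "x \<in> cycle_verts (2*n)"
      then have x: "x < 2*n" unfolding cycle_verts_def by simp
      define y where "y = x mod n"
      have yn: "y < n" using n3 unfolding y_def by simp
      have xy: "int x mod int n = int y" unfolding y_def by (simp add: zmod_int)
      have m2: "2 \<le> 2*n" using n3 by simp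
      have Dd: "D (int (2*n)) (int w - int x) = (if even (int w - int x) = even (D (int n) (int w - int x))
          then D (int n) (int w - int x) else int n - D (int n) (int w - int x))" for w
        using D_double[OF n0, of "int w - int x"] odd by simp
      show "\<exists>v\<in>S'. gdist (cycle_adj (2 * n)) x v = lab' v"
      proof (cases "even x")
        case True
        obtain v where v: "v \<in> S0" "nat (D (int n) (int v - int y)) = lab v" using cov0[OF yn] by blast
        have vn: "v < n" using v S0V by auto
        define w where "w = lift v (p v)"
        have wI: "(v, True) \<in> I" using v unfolding I_def by simp
        have fw: "f (v, True) = w" unfolding f_def w_def by simp
        have wlt: "w < 2*n" using lift_lt vn unfolding w_def by simp
        have wm: "int w mod int n = int v" using lift_mod[OF vn] unfolding w_def by (metis zmod_int)
        have e1: "D (int n) (int w - int x) = D (int n) (int v - int y)"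
          apply (rule D_cong) using wm xy by (metis mod_diff_eq)
        have ow: "odd w = p v" using lift_odd[of v "p v"] unfolding w_def .
        have ev: "even (int w - int x) = (\<not> p v)" using ow True by (cases "p v") auto
        have D0: "0 \<le> D (int n) (int v - int y)" using D_bound[OF n0] by simp
        have Dl: "D (int n) (int v - int y) = int (lab v)" using v(2) D0 by simp
        have ln: "lab v \<le> n" using labh[OF v(1)] nh by simp
        have nl: "nat (int n - int (lab v)) = n - lab v" using ln by simp
        have "gdist (cycle_adj (2*n)) x w = nat (D (int (2*n)) (int w - int x))"
          using gdist_cyc[OF m2 x wlt] .
        also have "\<dots> = g (v, True)" unfolding Dd e1 ev g_def Dl nl by (cases "p v") auto
        finally show ?thesis using lab'f[OF wI] fw wI unfolding S'_def by force
      next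
        case False
        obtain v where v: "v \<in> S0" "nat (D (int n) (int v - int (\<sigma> y))) = lab v"
          using cov0[OF \<sigma>_lt] by blast
        have vn: "v < n" using v S0V by auto
        define w where "w = lift (\<sigma> v) (p v)"
        have wI: "(v, False) \<in> I" using v unfolding I_def by simp
        have fw: "f (v, False) = w" unfolding f_def w_def by simp
        have wlt: "w < 2*n" using lift_lt \<sigma>_lt unfolding w_def by simp
        have wm: "int w mod int n = int (\<sigma> v)" using lift_mod[OF \<sigma>_lt] unfolding w_def by (metis zmod_int)
        have e1: "D (int n) (int w - int x) = D (int n) (int v - int (\<sigma> y))"
          unfolding \<sigma>_iso[symmetric]
          apply (rule D_cong) using wm xy by (metis mod_diff_eq)
        have ow: "odd w = p v" using lift_odd[of "\<sigma> v" "p v"] unfolding w_def .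
        have ev: "even (int w - int x) = p v" using ow False by (cases "p v") auto
        have D0: "0 \<le> D (int n) (int v - int (\<sigma> y))" using D_bound[OF n0] by simp
        have Dl: "D (int n) (int v - int (\<sigma> y)) = int (lab v)" using v(2) D0 by simp
        have ln: "lab v \<le> n" using labh[OF v(1)] nh by simp
        have nl: "nat (int n - int (lab v)) = n - lab v" using ln by simp
        have "gdist (cycle_adj (2*n)) x w = nat (D (int (2*n)) (int w - int x))"
          using gdist_cyc[OF m2 x wlt] .
        also have "\<dots> = g (v, False)" unfolding Dd e1 ev g_def Dl nl by (cases "p v") auto
        finally show ?thesis using lab'f[OF wI] fw wI unfolding S'_def by force
      qed
    qed
  qed
  then show ?thesis by blast
qed

theorem proposition4p8:
  fixes n :: nat
  assumes "odd n" and "3 \<le> n"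
    and "admits_optimal_eids n"
  shows "admits_optimal_eids (2 * n)"
proof -
  obtain S lab where "ext_irr_dom_set (cycle_verts n) (cycle_adj n) S lab"
    using assms(3) unfolding admits_optimal_eids_def optimal_ext_irr_dom_set_def by blast
  then obtain S' lab' where e: "ext_irr_dom_set (cycle_verts (2*n)) (cycle_adj (2*n)) S' lab'"
    using main_construction assms(1,2) by blast
  let ?P = "\<lambda>k. \<exists>S lab. ext_irr_dom_set (cycle_verts (2*n)) (cycle_adj (2*n)) S lab \<and> card S = k"
  have "?P (card S')" using e by blast
  then have "?P (Least ?P)" by (rule LeastI)
  then show ?thesis unfolding admits_optimal_eids_def optimal_ext_irr_dom_set_def gamma_e_def by blast
qed

end
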